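(* Let $n\geq 1$. For a Tamari interval $[S,T]$ of size $n$, define $\psi([S,T])=(c_1,\dots,c_{n-1})$ by $c_i=r_S(i)-\ell_T(i+1)$ for $i\in[n-1]$, where $r_S(i)$ is the number of nodes in the right subtree of node $i$ of $S$ and $\ell_T(j)$ is the number of nodes in the left subtree of node $j$ of $T$. Then $\psi$ takes values in $\mathcal{CC}_n$ and is an isomorphism of posets from $(\mathcal{TI}_n,\leq_{\mathrm{ti}})$ to $(\mathcal{CC}_n,\leq_{\mathrm{cc}})$.
   Context: Binary trees with $n$ nodes have their nodes labeled $1,\dots,n$ in in-order (left subtree, root, right subtree). A right rotation replaces a subtree of the form $((A,x,B),y,C)$ by $(A,x,(B,y,C))$. The Tamari order: $S\leq_{\mathrm t}T$ iff $T$ is obtained from $S$ by a finite sequence of right rotations. $\mathcal{TI}_n$ is the set of Tamari intervals $[S,T]$, i.e. pairs of binary trees with $n$ nodes with $S\leq_{\mathrm t}T$, ordered by $[S,T]\leq_{\mathrm{ti}}[S',T']$ iff $S\leq_{\mathrm t}S'$ and $T\leq_{\mathrm t}T'$. A Tamari diagram of size $n$ is a word $u=u_1\cdots u_n$ of integers with $0\leq u_i\leq n-i$ and $u_{i+j}\leq u_i-j$ for all $i\in[n]$, $0\leq j\leq u_i$. A dual Tamari diagram of size $n$ is a word $v$ of integers with $0\leq v_i\leq i-1$ and $v_{i-j}\leq v_i-j$ for all $i\in[n]$, $0\leq j\leq v_i$. $(u,v)$ is a Tamari interval diagram if moreover for all $1\leq i<j\leq n$ with $j-i\leq u_i$ one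 has $v_j<j-i$. A cubic coordinate of size $n$ is $c\in\mathbb{Z}^{n-1}$ such that $(u,v)$ with $u_i=\max(c_i,0)$ ($i\in[n-1]$), $u_n=0$, $v_1=0$, $v_i=|\min(c_{i-1},0)|$ ($2\leq i\leq n$) is a Tamari interval diagram; $\mathcal{CC}_n$ is their set, ordered componentwise: $c\leq_{\mathrm{cc}}c'$ iff $c_i\leq c'_i$ for all $i$. (The map $\psi$ is the composite of the Châtel–Pons bijection from Tamari intervals to interval-posets with the bijections from interval-posets to Tamari interval diagrams to cubic coordinates.) *)

theory Defs
  imports Main
begin

text \<open>Unlabelled binary trees; the nodes of a tree with n nodes are labelled 1..n in in-order.\<close>
datatype bt = Leaf | Node bt bt

fun nodes :: "bt \<Rightarrow> nat" where
  "nodes Leaf = 0"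
| "nodes (Node l r) = Suc (nodes l + nodes r)"

inductive right_rot :: "bt \<Rightarrow> bt \<Rightarrow> bool" where
  root: "right_rot (Node (Node A B) C) (Node A (Node B C))"
| left: "right_rot l l' \<Longrightarrow> right_rot (Node l r) (Node l' r)"
| right: "right_rot r r' \<Longrightarrow> right_rot (Node l r) (Node l r')"

definition tamari_le :: "bt \<Rightarrow> bt \<Rightarrow> bool" where
  "tamari_le S T \<longleftrightarrow> right_rot\<^sup>*\<^sup>* S T"

fun rsub :: "bt \<Rightarrow> nat \<Rightarrow> nat" where
  "rsub Leaf i = 0"
| "rsub (Node l r) i =
     (if i \<le> nodes l then rsub l i
      else if i = Suc (nodes l) then nodes r
      else rsub r (i - Suc (nodes l)))"

fun lsub :: "bt \<Rightarrow> nat \<Rightarrow> nat" where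
  "lsub Leaf i = 0"
| "lsub (Node l r) i =
     (if i \<le> nodes l then lsub l i
      else if i = Suc (nodes l) then nodes l
      else lsub r (i - Suc (nodes l)))"

definition TI :: "nat \<Rightarrow> (bt \<times> bt) set" where
  "TI n = {(S, T). nodes S = n \<and> nodes T = n \<and> tamari_le S T}"

definition ti_le :: "bt \<times> bt \<Rightarrow> bt \<times> bt \<Rightarrow> bool" where
  "ti_le I J \<longleftrightarrow> tamari_le (fst I) (fst J) \<and> tamari_le (snd I) (snd J)"

text \<open>Words are represented as functions nat => nat, 1-indexed, relevant on 1..n.\<close>
definition tamari_diagram :: "nat \<Rightarrow> (nat \<Rightarrow> nat) \<Rightarrow> bool" where
  "tamari_diagram n u \<longleftrightarrow>
     (\<forall>i\<in>{1..n}. u i \<le> n - i \<and> (\<forall>j. j \<le> u i \<longrightarrow> u (i + j) \<le> u i - j))"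

definition dual_tamari_diagram :: "nat \<Rightarrow> (nat \<Rightarrow> nat) \<Rightarrow> bool" where
  "dual_tamari_diagram n v \<longleftrightarrow>
     (\<forall>i\<in>{1..n}. v i \<le> i - 1 \<and> (\<forall>j. j \<le> v i \<longrightarrow> v (i - j) \<le> v i - j))"

definition tamari_interval_diagram :: "nat \<Rightarrow> (nat \<Rightarrow> nat) \<Rightarrow> (nat \<Rightarrow> nat) \<Rightarrow> bool" where
  "tamari_interval_diagram n u v \<longleftrightarrow>
     tamari_diagram n u \<and> dual_tamari_diagram n v \<and>
     (\<forall>i j. 1 \<le> i \<and> i < j \<and> j \<le> n \<and> j - i \<le> u i \<longrightarrow> v j < j - i)"

text \<open>Cubic coordinates: c = (c_1,...,c_{n-1}) is the list with c!(i-1) = c_i.\<close>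
definition cc_u :: "nat \<Rightarrow> int list \<Rightarrow> nat \<Rightarrow> nat" where
  "cc_u n c i = (if 1 \<le> i \<and> i \<le> n - 1 then nat (max (c ! (i - 1)) 0) else 0)"

definition cc_v :: "nat \<Rightarrow> int list \<Rightarrow> nat \<Rightarrow> nat" where
  "cc_v n c i = (if 2 \<le> i \<and> i \<le> n then nat \<bar>min (c ! (i - 2)) 0\<bar> else 0)"

definition CC :: "nat \<Rightarrow> int list set" where
  "CC n = {c. length c = n - 1 \<and> tamari_interval_diagram n (cc_u n c) (cc_v n c)}"

definition cc_le :: "int list \<Rightarrow> int list \<Rightarrow> bool" where
  "cc_le c c' \<longleftrightarrow> list_all2 (\<le>) c c'"

definition psi :: "nat \<Rightarrow> bt \<times> bt \<Rightarrow> int list" where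
  "psi n I = map (\<lambda>i. int (rsub (fst I) i) - int (lsub (snd I) (i + 1))) [1..<n]"

end

theory Submission
  imports Defs
begin


lemma rsub_bound: "rsub t i \<le> nodes t - i"
proof (induction t arbitrary: i)
  case Leaf thus ?case by simp
next
  case (Node l r)
  show ?case using Node.IH[of i] Node.IH(2)[of "i - Suc (nodes l)"] by (simp, linarith)
qed

lemma lsub_bound: "lsub t i \<le> i - 1"
proof (induction t arbitrary: i)
  case Leaf thus ?case by simp
next
  case (Node l r)
  show ?case using Node.IH[of i] Node.IH(2)[of "i - Suc (nodes l)"] by (simp, linarith)
qed


lemma rsub_nest: "1 \<le> i \<Longrightarrow> i \<le> nodes t \<Longrightarrow> j \<le> rsub t i \<Longrightarrow> rsub t (i + j) \<le> rsub t i - j"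
proof (induction t arbitrary: i)
  case Leaf thus ?case by simp
next
  case (Node l r)
  show ?case
  proof (cases "i \<le> nodes l")
    case True
    have "rsub l i \<le> nodes l - i" using rsub_bound[of l i] by simp
    then have "i + j \<le> nodes l" using True Node.prems by simp
    moreover have "rsub l (i + j) \<le> rsub l i - j" using Node.IH(1)[of i] True Node.prems by simp
    ultimately show ?thesis using True by simp
  next
    case False
    show ?thesis
    proof (cases "i = Suc (nodes l)")
      case True
      then show ?thesis using Node.prems rsub_bound[of r j] by (cases "j = 0") simp_all
    next
      case F2: False
      define k where "k = i - Suc (nodes l)"
      have i: "i = k + Suc (nodes l)" "1 \<le> k" "k \<le> nodes r" using False F2 Node.prems unfolding k_def by auto
      have j: "j \<le> rsub r k" using Node.prems(3) i by simp
      have "rsub r (k + j) \<le> rsub r k - j"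
        using Node.IH(2)[OF i(2) i(3) j] .
      then show ?thesis using i by simp
    qed
  qed
qed

lemma lsub_Node_r: "1 \<le> m \<Longrightarrow> lsub (Node l r) (m + Suc (nodes l)) = lsub r m"
  by simp

lemma rsub_Node_r: "1 \<le> m \<Longrightarrow> rsub (Node l r) (m + Suc (nodes l)) = rsub r m"
  by simp

lemma lsub_nest: "1 \<le> i \<Longrightarrow> i \<le> nodes t \<Longrightarrow> j \<le> lsub t i \<Longrightarrow> lsub t (i - j) \<le> lsub t i - j"
proof (induction t arbitrary: i)
  case Leaf thus ?case by simp
next
  case (Node l r)
  have lb: "lsub (Node l r) i \<le> i - 1" by (rule lsub_bound)
  show ?case
  proof (cases "i \<le> nodes l")
    case True
    have j: "j \<le> lsub l i" using Node.prems(3) True by simp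
    have "i - j \<le> nodes l" using True by simp
    moreover have "lsub l (i - j) \<le> lsub l i - j" using Node.IH(1)[OF Node.prems(1) True j] .
    ultimately show ?thesis using True by simp
  next
    case False
    show ?thesis
    proof (cases "i = Suc (nodes l)")
      case True
      show ?thesis
      proof (cases "j = 0")
        case False
        then have "i - j \<le> nodes l" using True by simp
        then show ?thesis using True Node.prems lsub_bound[of l "i - j"] by simp
      qed simp
    next
      case F2: False
      define k where "k = i - Suc (nodes l)"
      have i: "i = k + Suc (nodes l)" "1 \<le> k" "k \<le> nodes r" using False F2 Node.prems unfolding k_def by auto
      have j: "j \<le> lsub r k" using Node.prems(3) i by simp
      have "lsub r (k - j) \<le> lsub r k - j"
        using Node.IH(2)[OF i(2) i(3) j] .
      moreover have "lsub r k \<le> k - 1" by (rule lsub_bound)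
      ultimately have kj: "i - j = (k - j) + Suc (nodes l)" "k - j \<ge> 1" using i j by auto
      have e1: "lsub (Node l r) i = lsub r k" using i by simp
      have e2: "lsub (Node l r) (i - j) = lsub r (k - j)" unfolding kj(1) by (rule lsub_Node_r[OF kj(2)])
      show ?thesis unfolding e1 e2 by fact
    qed
  qed
qed

lemma F1: "1 \<le> i \<Longrightarrow> i < j \<Longrightarrow> j \<le> nodes t \<Longrightarrow> j - i \<le> rsub t i \<Longrightarrow> lsub t j < j - i"
proof (induction t arbitrary: i j)
  case Leaf thus ?case by simp
next
  case (Node l r)
  show ?case
  proof (cases "j \<le> nodes l")
    case True
    have "j - i \<le> rsub l i" using Node.prems True by simp
    from Node.IH(1)[OF Node.prems(1,2) True this] show ?thesis using True by simp
  next
    case False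
    show ?thesis
    proof (cases "i \<le> nodes l")
      case True
      have "rsub l i \<le> nodes l - i" by (rule rsub_bound)
      then have False using Node.prems True False by simp
      then show ?thesis ..
    next
      case F2: False
      show ?thesis
      proof (cases "i = Suc (nodes l)")
        case True
        have "lsub r (j - Suc (nodes l)) \<le> j - Suc (nodes l) - 1" by (rule lsub_bound)
        then show ?thesis using True False Node.prems by simp
      next
        case F3: False
        define a where "a = i - Suc (nodes l)"
        define b where "b = j - Suc (nodes l)"
        have ab: "i = a + Suc (nodes l)" "j = b + Suc (nodes l)" "1 \<le> a" "a < b" "b \<le> nodes r"
          using F2 F3 Node.prems unfolding a_def b_def by auto
        have "b - a \<le> rsub r a" using Node.prems(4) ab by simp
        from Node.IH(2)[OF ab(3,4,5) this] show ?thesis using ab by simp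
      qed
    qed
  qed
qed

lemma F2: "1 \<le> i \<Longrightarrow> i + rsub t i + 1 \<le> nodes t \<Longrightarrow> lsub t (i + rsub t i + 1) \<ge> rsub t i + 1"
proof (induction t arbitrary: i)
  case Leaf thus ?case by simp
next
  case (Node l r)
  show ?case
  proof (cases "i \<le> nodes l")
    case True
    have rb: "rsub l i \<le> nodes l - i" by (rule rsub_bound)
    have e: "rsub (Node l r) i = rsub l i" using True by simp
    show ?thesis
    proof (cases "i + rsub l i + 1 \<le> nodes l")
      case T2: True
      from Node.IH(1)[OF Node.prems(1) T2] show ?thesis using e T2 by simp
    next
      case False
      then have "i + rsub l i + 1 = Suc (nodes l)" using rb True by simp
      then show ?thesis using e rb Node.prems(1) True by simp
    qed
  next
    case False
    show ?thesis
    proof (cases "i = Suc (nodes l)")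
      case True
      then show ?thesis using Node.prems by simp
    next
      case F3: False
      define a where "a = i - Suc (nodes l)"
      have a: "i = a + Suc (nodes l)" "1 \<le> a" using False F3 unfolding a_def by auto
      have e: "rsub (Node l r) i = rsub r a" using a by simp
      have "a + rsub r a + 1 \<le> nodes r" using Node.prems(2) a e by simp
      from Node.IH(2)[OF a(2) this] show ?thesis using a e by simp
    qed
  qed
qed

lemma rot_nodes: "right_rot s t \<Longrightarrow> nodes s = nodes t"
  by (induction rule: right_rot.induct) auto

lemma rot_rsub: "right_rot s t \<Longrightarrow> rsub s i \<le> rsub t i"
proof (induction arbitrary: i rule: right_rot.induct)
  case (root A B C)
  consider "i \<le> nodes A" | "i = nodes A + 1" | "nodes A + 1 < i \<and> i \<le> nodes A + nodes B + 1"
    | "i = nodes A + nodes B + 2" | "i > nodes A + nodes B + 2" by linarith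
  then show ?case
  proof cases
    case 3
    then have "i - Suc (nodes A) \<le> nodes B" "i - Suc (nodes A) \<noteq> 0" by auto
    then show ?thesis using 3 by simp
  next
    case 5
    define k where "k = i - Suc (Suc (nodes A + nodes B))"
    have "i = Suc (Suc (nodes A + nodes B)) + k" "k > 0" using 5 unfolding k_def by auto
    then show ?thesis by simp
  qed (simp_all add: rsub_bound)
next
  case (left l l' r)
  then show ?case using rot_nodes[OF left.hyps] by simp
next
  case (right r r' l)
  then show ?case using rot_nodes[OF right.hyps] by simp
qed

lemma rot_lsub: "right_rot s t \<Longrightarrow> lsub t i \<le> lsub s i"
proof (induction arbitrary: i rule: right_rot.induct)
  case (root A B C)
  consider "i \<le> nodes A" | "i = nodes A + 1" | "nodes A + 1 < i \<and> i \<le> nodes A + nodes B + 1"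
    | "i = nodes A + nodes B + 2" | "i > nodes A + nodes B + 2" by linarith
  then show ?case
  proof cases
    case 3
    then have "i - Suc (nodes A) \<le> nodes B" "i - Suc (nodes A) \<noteq> 0" by auto
    then show ?thesis using 3 by simp
  next
    case 5
    define k where "k = i - Suc (Suc (nodes A + nodes B))"
    have "i = Suc (Suc (nodes A + nodes B)) + k" "k > 0" using 5 unfolding k_def by auto
    then show ?thesis by simp
  qed (simp_all add: lsub_bound)
next
  case (left l l' r)
  then show ?case using rot_nodes[OF left.hyps] by simp
next
  case (right r r' l)
  then show ?case by simp
qed


lemma rsub_Node_l: "i \<le> nodes l \<Longrightarrow> rsub (Node l r) i = rsub l i" by simp
lemma rsub_Node_root: "rsub (Node l r) (Suc (nodes l)) = nodes r" by simp
lemma lsub_Node_l: "i \<le> nodes l \<Longrightarrow> lsub (Node l r) i = lsub l i" by simp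

lemma tl_refl: "tamari_le s s" unfolding tamari_le_def by simp
lemma tl_trans: "tamari_le s t \<Longrightarrow> tamari_le t u \<Longrightarrow> tamari_le s u"
  unfolding tamari_le_def by simp
lemma tl_step: "right_rot s t \<Longrightarrow> tamari_le s t" unfolding tamari_le_def by simp

lemma tl_left: "tamari_le l l' \<Longrightarrow> tamari_le (Node l r) (Node l' r)"
  unfolding tamari_le_def
proof (induction rule: rtranclp_induct)
  case base then show ?case by simp
next
  case (step y z)
  then show ?case by (meson right_rot.left rtranclp.rtrancl_into_rtrancl)
qed

lemma tl_right: "tamari_le r r' \<Longrightarrow> tamari_le (Node l r) (Node l r')"
  unfolding tamari_le_def
proof (induction rule: rtranclp_induct)
  case base then show ?case by simp
next
  case (step y z)
  then show ?case by (meson right_rot.right rtranclp.rtrancl_into_rtrancl)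
qed

lemma tl_nodes: "tamari_le s t \<Longrightarrow> nodes s = nodes t"
  unfolding tamari_le_def by (induction rule: rtranclp_induct) (auto dest: rot_nodes)

lemma tl_rsub: "tamari_le s t \<Longrightarrow> rsub s i \<le> rsub t i"
  unfolding tamari_le_def
proof (induction rule: rtranclp_induct)
  case base then show ?case by simp
next
  case (step y z)
  then show ?case using rot_rsub[OF step(2), of i] by simp
qed

lemma tl_lsub: "tamari_le s t \<Longrightarrow> lsub t i \<le> lsub s i"
  unfolding tamari_le_def
proof (induction rule: rtranclp_induct)
  case base then show ?case by simp
next
  case (step y z)
  then show ?case using rot_lsub[OF step(2), of i] by simp
qed

lemma lift: "1 \<le> k \<Longrightarrow> k \<le> nodes S \<Longrightarrow> (\<forall>i. 1 \<le> i \<and> i < k \<longrightarrow> i + rsub S i < k) \<Longrightarrow>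
  \<exists>S1 S2. nodes S1 = k - 1 \<and> tamari_le S (Node S1 S2) \<and> (\<forall>i. i \<noteq> k \<longrightarrow> rsub (Node S1 S2) i = rsub S i)"
proof (induction S arbitrary: k)
  case Leaf then show ?case by simp
next
  case (Node L R)
  consider "k = Suc (nodes L)" | "k > Suc (nodes L)" | "k \<le> nodes L" by linarith
  then show ?case
  proof cases
    case 1
    have "nodes L = k - 1" "tamari_le (Node L R) (Node L R)" using 1 tl_refl by simp_all
    then show ?thesis by blast
  next
    case 2
    have "Suc (nodes L) + rsub (Node L R) (Suc (nodes L)) < k" using Node.prems(3) 2 by auto
    then have False using Node.prems(2) by simp
    then show ?thesis ..
  next
    case 3
    have h: "\<forall>i. 1 \<le> i \<and> i < k \<longrightarrow> i + rsub L i < k"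
    proof (intro allI impI)
      fix i assume i: "1 \<le> i \<and> i < k"
      then have "rsub (Node L R) i = rsub L i" using 3 by simp
      then show "i + rsub L i < k" using Node.prems(3) i by metis
    qed
    obtain L1 L2 where L: "nodes L1 = k - 1" "tamari_le L (Node L1 L2)"
      "\<forall>i. i \<noteq> k \<longrightarrow> rsub (Node L1 L2) i = rsub L i"
      using Node.IH(1)[OF Node.prems(1) 3 h] by blast
    have nL: "nodes L = k + nodes L2" using tl_nodes[OF L(2)] L(1) Node.prems(1) by simp
    have le: "tamari_le (Node L R) (Node L1 (Node L2 R))"
      using tl_trans[OF tl_left[OF L(2)] tl_step[OF right_rot.root]] .
    have ag: "rsub (Node L1 (Node L2 R)) i = rsub (Node L R) i" if "i \<noteq> k" for i
    proof -
      have "i < k \<or> (k < i \<and> i \<le> nodes L) \<or> i = Suc (nodes L) \<or> i > Suc (nodes L)"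
        using that by presburger
      then consider "i < k" | "k < i \<and> i \<le> nodes L" | "i = Suc (nodes L)" | "i > Suc (nodes L)"
        by blast
      then show ?thesis
      proof cases
        case 1
        then have "i \<le> nodes L1" using L(1) by linarith
        then have "rsub (Node L1 (Node L2 R)) i = rsub (Node L1 L2) i" by simp
        also have "\<dots> = rsub L i" using L(3) 1 by simp
        also have "\<dots> = rsub (Node L R) i" using 1 3 by simp
        finally show ?thesis .
      next
        case 2
        define d where "d = i - Suc (nodes L1)"
        have d: "i = d + Suc (nodes L1)" "1 \<le> d" "d \<le> nodes L2"
          using 2 L(1) nL Node.prems(1) unfolding d_def by linarith+
        have "rsub (Node L1 (Node L2 R)) i = rsub (Node L2 R) d" unfolding d(1) by (rule rsub_Node_r[OF d(2)])
        also have "\<dots> = rsub L2 d" using d(3) by simp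
        also have "\<dots> = rsub (Node L1 L2) i" unfolding d(1) by (rule rsub_Node_r[OF d(2), symmetric])
        also have "\<dots> = rsub L i" using L(3) 2 by simp
        also have "\<dots> = rsub (Node L R) i" using 2 by simp
        finally show ?thesis .
      next
        case 3
        have e: "i = Suc (nodes L2) + Suc (nodes L1)" using 3 nL L(1) Node.prems(1) by simp
        have "rsub (Node L1 (Node L2 R)) i = rsub (Node L2 R) (Suc (nodes L2))"
          unfolding e by (rule rsub_Node_r) simp
        then show ?thesis using 3 by simp
      next
        case 4
        define d where "d = i - Suc (nodes L)"
        have d: "i = d + Suc (nodes L)" "1 \<le> d" using 4 unfolding d_def by linarith+
        have e: "i = (d + Suc (nodes L2)) + Suc (nodes L1)" using d nL L(1) Node.prems(1) by linarith
        have "rsub (Node L1 (Node L2 R)) i = rsub (Node L2 R) (d + Suc (nodes L2))"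
          unfolding e by (rule rsub_Node_r) simp
        also have "\<dots> = rsub R d" using rsub_Node_r[OF d(2)] .
        also have "\<dots> = rsub (Node L R) i" unfolding d(1) by (rule rsub_Node_r[OF d(2), symmetric])
        finally show ?thesis .
      qed
    qed
    show ?thesis using L(1) le ag by blast
  qed
qed


lemma rle_tl: "nodes S = nodes T \<Longrightarrow> (\<forall>i. 1 \<le> i \<and> i \<le> nodes T \<longrightarrow> rsub S i \<le> rsub T i) \<Longrightarrow> tamari_le S T"
proof (induction T arbitrary: S)
  case Leaf then show ?case using tl_refl by (cases S) auto
next
  case (Node T1 T2)
  define k where "k = Suc (nodes T1)"
  have h: "\<forall>i. 1 \<le> i \<and> i < k \<longrightarrow> i + rsub S i < k"
  proof (intro allI impI)
    fix i assume i: "1 \<le> i \<and> i < k"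
    then have "i \<le> nodes (Node T1 T2)" using k_def by simp
    then have "rsub S i \<le> rsub (Node T1 T2) i" using Node.prems(2)[rule_format, of i] i by blast
    also have "\<dots> = rsub T1 i" using i k_def by simp
    also have "\<dots> \<le> nodes T1 - i" by (rule rsub_bound)
    finally show "i + rsub S i < k" using i k_def by linarith
  qed
  have k1: "1 \<le> k" "k \<le> nodes S" using Node.prems(1) k_def by simp_all
  obtain S1 S2 where S: "nodes S1 = k - 1" "tamari_le S (Node S1 S2)"
      "\<forall>i. i \<noteq> k \<longrightarrow> rsub (Node S1 S2) i = rsub S i"
    using lift[OF k1 h] by blast
  have n1: "nodes S1 = nodes T1" using S(1) k_def by simp
  have n2: "nodes S2 = nodes T2" using tl_nodes[OF S(2)] Node.prems(1) n1 by simp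
  have "tamari_le S1 T1"
  proof (rule Node.IH(1)[OF n1], intro allI impI)
    fix i assume i: "1 \<le> i \<and> i \<le> nodes T1"
    have "rsub S1 i = rsub (Node S1 S2) i" using i n1 by simp
    also have "\<dots> = rsub S i" using S(3) i k_def by simp
    also have "\<dots> \<le> rsub (Node T1 T2) i" using Node.prems(2)[rule_format, of i] i by simp
    also have "\<dots> = rsub T1 i" using i by simp
    finally show "rsub S1 i \<le> rsub T1 i" .
  qed
  moreover have "tamari_le S2 T2"
  proof (rule Node.IH(2)[OF n2], intro allI impI)
    fix i assume i: "1 \<le> i \<and> i \<le> nodes T2"
    have i1: "1 \<le> i" using i by simp
    have "rsub S2 i = rsub (Node S1 S2) (i + Suc (nodes S1))" using rsub_Node_r[OF i1] by simp
    also have "\<dots> = rsub S (i + Suc (nodes S1))" using S(3)[rule_format, of "i + Suc (nodes S1)"] i1 k_def n1 by simp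
    also have "\<dots> \<le> rsub (Node T1 T2) (i + Suc (nodes S1))"
      by (rule Node.prems(2)[rule_format]) (use i n1 in simp)
    also have "\<dots> = rsub T2 i" using rsub_Node_r[OF i1] n1 by simp
    finally show "rsub S2 i \<le> rsub T2 i" .
  qed
  ultimately have "tamari_le (Node S1 S2) (Node T1 T2)"
    using tl_trans[OF tl_left tl_right] by blast
  then show ?case using tl_trans[OF S(2)] by blast
qed

lemma r_inj: "nodes S = nodes S' \<Longrightarrow> (\<forall>i. 1 \<le> i \<and> i \<le> nodes S \<longrightarrow> rsub S i = rsub S' i) \<Longrightarrow> S = S'"
proof (induction S arbitrary: S')
  case Leaf then show ?case by (cases S') auto
next
  case (Node L R)
  obtain L' R' where S': "S' = Node L' R'" using Node.prems(1) by (cases S') auto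
  have nl: "nodes L = nodes L'"
  proof (rule ccontr)
    assume "nodes L \<noteq> nodes L'"
    then consider "nodes L < nodes L'" | "nodes L' < nodes L" by linarith
    then show False
    proof cases
      case 1
      define i where "i = Suc (nodes L)"
      have "rsub (Node L R) i = nodes R" unfolding i_def by simp
      moreover have "rsub S' i = rsub L' i" using 1 S' i_def by simp
      moreover have "rsub L' i \<le> nodes L' - i" by (rule rsub_bound)
      moreover have "rsub (Node L R) i = rsub S' i" using Node.prems(2)[rule_format, of i] i_def 1 by simp
      ultimately show False using Node.prems(1) S' 1 i_def by simp
    next
      case 2
      define i where "i = Suc (nodes L')"
      have "rsub S' i = nodes R'" unfolding i_def S' by simp
      moreover have "rsub (Node L R) i = rsub L i" using 2 i_def by simp
      moreover have "rsub L i \<le> nodes L - i" by (rule rsub_bound)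
      moreover have "rsub (Node L R) i = rsub S' i" using Node.prems(2)[rule_format, of i] Node.prems(1) i_def 2 S' by simp
      ultimately show False using Node.prems(1) S' 2 i_def by simp
    qed
  qed
  have "L = L'"
  proof (rule Node.IH(1)[OF nl], intro allI impI)
    fix i assume i: "1 \<le> i \<and> i \<le> nodes L"
    have "rsub L i = rsub (Node L R) i" using i by simp
    also have "\<dots> = rsub S' i" using Node.prems(2)[rule_format, of i] i by simp
    also have "\<dots> = rsub L' i" using S' i nl by simp
    finally show "rsub L i = rsub L' i" .
  qed
  moreover have "R = R'"
  proof (rule Node.IH(2))
    show "nodes R = nodes R'" using Node.prems(1) S' nl by simp
  next
    show "\<forall>i. 1 \<le> i \<and> i \<le> nodes R \<longrightarrow> rsub R i = rsub R' i"
    proof (intro allI impI)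
    fix i assume i: "1 \<le> i \<and> i \<le> nodes R"
    have i1: "1 \<le> i" using i by simp
    have "rsub R i = rsub (Node L R) (i + Suc (nodes L))" using rsub_Node_r[OF i1] by simp
    also have "\<dots> = rsub S' (i + Suc (nodes L))"
      by (rule Node.prems(2)[rule_format]) (use i in simp)
    also have "\<dots> = rsub R' i" using rsub_Node_r[OF i1] nl S' by simp
    finally show "rsub R i = rsub R' i" .
    qed
  qed
  ultimately show ?case using S' by simp
qed

definition compat :: "nat \<Rightarrow> bt \<Rightarrow> bt \<Rightarrow> bool" where
  "compat n S T \<longleftrightarrow> (\<forall>i j. 1 \<le> i \<and> i < j \<and> j \<le> n \<and> j - i \<le> rsub S i \<longrightarrow> lsub T j < j - i)"

lemma compat_rle: "nodes S = n \<Longrightarrow> nodes T = n \<Longrightarrow> compat n S T \<Longrightarrow> 1 \<le> i \<Longrightarrow> i \<le> n \<Longrightarrow> rsub S i \<le> rsub T i"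
proof (rule ccontr)
  assume a: "nodes S = n" "nodes T = n" "compat n S T" "1 \<le> i" "i \<le> n" "\<not> rsub S i \<le> rsub T i"
  define j where "j = i + rsub T i + 1"
  have "rsub S i \<le> n - i" using rsub_bound[of S i] a by simp
  then have j: "j \<le> n" "i < j" "j - i \<le> rsub S i" using a j_def by auto
  have "lsub T j \<ge> rsub T i + 1" using F2[of i T] a j j_def by simp
  moreover have "lsub T j < j - i" using a(3) j a(4) unfolding compat_def by blast
  ultimately show False using j_def by simp
qed

lemma rle_compat: "nodes T = n \<Longrightarrow> (\<forall>i. 1 \<le> i \<and> i \<le> n \<longrightarrow> rsub S i \<le> rsub T i) \<Longrightarrow> compat n S T"
  unfolding compat_def
proof (intro allI impI)
  fix i j assume a: "nodes T = n" "\<forall>i. 1 \<le> i \<and> i \<le> n \<longrightarrow> rsub S i \<le> rsub T i"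
    "1 \<le> i \<and> i < j \<and> j \<le> n \<and> j - i \<le> rsub S i"
  then have "j - i \<le> rsub T i" by (meson le_trans less_imp_le_nat order.trans)
  then show "lsub T j < j - i" using F1[of i j T] a by simp
qed

lemma lle_compat: "nodes T = n \<Longrightarrow> (\<forall>j. 1 \<le> j \<and> j \<le> n \<longrightarrow> lsub T' j \<le> lsub T j) \<Longrightarrow> compat n T T'"
  unfolding compat_def
proof (intro allI impI)
  fix i j assume a: "nodes T = n" "\<forall>j. 1 \<le> j \<and> j \<le> n \<longrightarrow> lsub T' j \<le> lsub T j"
    "1 \<le> i \<and> i < j \<and> j \<le> n \<and> j - i \<le> rsub T i"
  then have "lsub T j < j - i" using F1[of i j T] by simp
  moreover have "lsub T' j \<le> lsub T j" using a by simp
  ultimately show "lsub T' j < j - i" by simp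
qed


lemma r_surj: "tamari_diagram n u \<Longrightarrow> \<exists>t. nodes t = n \<and> (\<forall>i. 1 \<le> i \<and> i \<le> n \<longrightarrow> rsub t i = u i)"
proof (induction n arbitrary: u rule: less_induct)
  case (less n)
  show ?case
  proof (cases "n = 0")
    case True
    then show ?thesis by (intro exI[of _ Leaf]) simp
  next
    case False
    have td: "\<And>i j. 1 \<le> i \<Longrightarrow> i \<le> n \<Longrightarrow> u i \<le> n - i"
         "\<And>i j. 1 \<le> i \<Longrightarrow> i \<le> n \<Longrightarrow> j \<le> u i \<Longrightarrow> u (i + j) \<le> u i - j"
      using less.prems unfolding tamari_diagram_def by auto
    define P where "P = (\<lambda>i. 1 \<le> i \<and> u i = n - i)"
    have Pn: "P n" using td(1)[of n] False unfolding P_def by simp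
    define m where "m = (LEAST i. P i)"
    have Pm: "P m" using LeastI[of P n] Pn m_def by simp
    have mn: "m \<le> n" using Least_le[of P n] Pn m_def by simp
    have notP: "\<And>i. i < m \<Longrightarrow> \<not> P i" using not_less_Least m_def by blast
    have m1: "1 \<le> m" "u m = n - m" using Pm P_def by auto
    have tl: "tamari_diagram (m - 1) u"
      unfolding tamari_diagram_def
    proof (intro ballI conjI allI impI)
      fix i assume i: "i \<in> {1..m - 1}"
      show "u i \<le> m - 1 - i"
      proof (rule ccontr)
        assume c: "\<not> u i \<le> m - 1 - i"
        then have j: "m - i \<le> u i" using i by auto
        have "u (i + (m - i)) \<le> u i - (m - i)" using td(2)[OF _ _ j] i mn by auto
        then have "u m \<le> u i - (m - i)" using i by auto
        then have "u i \<ge> n - i" using m1 i mn j by auto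
        moreover have "u i \<le> n - i" using td(1)[of i] i mn by auto
        ultimately have "P i" unfolding P_def using i by auto
        moreover have "i < m" using i by auto
        ultimately show False using notP by blast
      qed
      fix j assume "j \<le> u i"
      then show "u (i + j) \<le> u i - j" using td(2)[of i j] i mn by auto
    qed
    define u' where "u' = (\<lambda>i. u (i + m))"
    have tr: "tamari_diagram (n - m) u'"
      unfolding tamari_diagram_def
    proof (intro ballI conjI allI impI)
      fix i assume i: "i \<in> {1..n - m}"
      have "u (i + m) \<le> n - (i + m)" using td(1)[of "i + m"] i by auto
      then show "u' i \<le> n - m - i" unfolding u'_def by arith
      fix j assume "j \<le> u' i"
      then have j: "j \<le> u (i + m)" unfolding u'_def .
      have "i + m \<le> n" "1 \<le> i + m" using i by auto
      then have "u (i + m + j) \<le> u (i + m) - j" using td(2)[OF _ _ j] by blast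
      then show "u' (i + j) \<le> u' i - j" unfolding u'_def
        by (simp add: add.commute add.left_commute)
    qed
    have ml: "m - 1 < n" using m1 mn \<open>n \<noteq> 0\<close> by auto
    obtain L where L: "nodes L = m - 1" "\<forall>i. 1 \<le> i \<and> i \<le> m - 1 \<longrightarrow> rsub L i = u i"
      using less.IH[OF ml tl] by blast
    have nm: "n - m < n" using m1 mn \<open>n \<noteq> 0\<close> by auto
    obtain R where R: "nodes R = n - m" "\<forall>i. 1 \<le> i \<and> i \<le> n - m \<longrightarrow> rsub R i = u' i"
      using less.IH[OF nm tr] by blast
    have "nodes (Node L R) = n" using L R m1 mn by simp
    moreover have "\<forall>i. 1 \<le> i \<and> i \<le> n \<longrightarrow> rsub (Node L R) i = u i"
    proof (intro allI impI)
      fix i assume i: "1 \<le> i \<and> i \<le> n"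
      consider "i < m" | "i = m" | "i > m" by linarith
      then show "rsub (Node L R) i = u i"
      proof cases
        case 1
        then have il: "i \<le> nodes L" using L(1) by linarith
        then have "rsub (Node L R) i = rsub L i" by simp
        also have "\<dots> = u i" using L(2)[rule_format, of i] il L(1) i by simp
        finally show ?thesis .
      next
        case 2
        then show ?thesis using L R m1 by simp
      next
        case 3
        define d where "d = i - m"
        have d: "i = d + Suc (nodes L)" "1 \<le> d" "d \<le> n - m" using 3 L(1) m1 i unfolding d_def by auto
        have "rsub (Node L R) i = rsub R d" unfolding d(1) by (rule rsub_Node_r[OF d(2)])
        also have "\<dots> = u' d" using R(2) d by simp
        also have "\<dots> = u i" unfolding u'_def using d L(1) m1 by simp
        finally show ?thesis .
      qed
    qed
    ultimately show ?thesis by blast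
  qed
qed

lemma l_surj: "dual_tamari_diagram n v \<Longrightarrow> \<exists>t. nodes t = n \<and> (\<forall>i. 1 \<le> i \<and> i \<le> n \<longrightarrow> lsub t i = v i)"
proof (induction n arbitrary: v rule: less_induct)
  case (less n)
  show ?case
  proof (cases "n = 0")
    case True
    then show ?thesis by (intro exI[of _ Leaf]) simp
  next
    case False
    have td: "\<And>i j. 1 \<le> i \<Longrightarrow> i \<le> n \<Longrightarrow> v i \<le> i - 1"
         "\<And>i j. 1 \<le> i \<Longrightarrow> i \<le> n \<Longrightarrow> j \<le> v i \<Longrightarrow> v (i - j) \<le> v i - j"
      using less.prems unfolding dual_tamari_diagram_def by auto
    define A where "A = {i. 1 \<le> i \<and> i \<le> n \<and> v i = i - 1}"
    have fA: "finite A" unfolding A_def by simp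
    have A1: "1 \<in> A" using td(1)[of 1] False unfolding A_def by simp
    define m where "m = Max A"
    have mA: "m \<in> A" using Max_in[OF fA] A1 m_def by blast
    have notA: "\<And>i. i \<in> A \<Longrightarrow> i \<le> m" using Max_ge[OF fA] m_def by blast
    have m1: "1 \<le> m" "m \<le> n" "v m = m - 1" using mA A_def by auto
    have tl: "dual_tamari_diagram (m - 1) v"
      unfolding dual_tamari_diagram_def
    proof (intro ballI conjI allI impI)
      fix i assume i: "i \<in> {1..m - 1}"
      show "v i \<le> i - 1" using td(1)[of i] i m1 by auto
      fix j assume "j \<le> v i"
      then show "v (i - j) \<le> v i - j" using td(2)[of i j] i m1 by auto
    qed
    define v' where "v' = (\<lambda>i. v (i + m))"
    have tr: "dual_tamari_diagram (n - m) v'"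
      unfolding dual_tamari_diagram_def
    proof (intro ballI conjI allI impI)
      fix i assume i: "i \<in> {1..n - m}"
      show vb: "v' i \<le> i - 1"
      proof (rule ccontr)
        assume c: "\<not> v' i \<le> i - 1"
        then have j: "i \<le> v (i + m)" using i unfolding v'_def by auto
        have "v (i + m - i) \<le> v (i + m) - i" using td(2)[OF _ _ j] i m1 by auto
        then have "v (i + m) \<ge> i + m - 1" using m1 j by auto
        moreover have "v (i + m) \<le> i + m - 1" using td(1)[of "i + m"] i m1 by auto
        ultimately have "i + m \<in> A" unfolding A_def using i by auto
        then show False using notA[of "i + m"] i by auto
      qed
      fix j assume j: "j \<le> v' i"
      then have "j \<le> i - 1" using vb by simp
      then have e: "i - j + m = i + m - j" by simp
      show "v' (i - j) \<le> v' i - j" using td(2)[of "i + m" j] i j unfolding v'_def e by auto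
    qed
    have ml: "m - 1 < n" using m1 \<open>n \<noteq> 0\<close> by auto
    obtain L where L: "nodes L = m - 1" "\<forall>i. 1 \<le> i \<and> i \<le> m - 1 \<longrightarrow> lsub L i = v i"
      using less.IH[OF ml tl] by blast
    have nm: "n - m < n" using m1 \<open>n \<noteq> 0\<close> by auto
    obtain R where R: "nodes R = n - m" "\<forall>i. 1 \<le> i \<and> i \<le> n - m \<longrightarrow> lsub R i = v' i"
      using less.IH[OF nm tr] by blast
    have "nodes (Node L R) = n" using L R m1 by simp
    moreover have "\<forall>i. 1 \<le> i \<and> i \<le> n \<longrightarrow> lsub (Node L R) i = v i"
    proof (intro allI impI)
      fix i assume i: "1 \<le> i \<and> i \<le> n"
      consider "i < m" | "i = m" | "i > m" by linarith
      then show "lsub (Node L R) i = v i"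
      proof cases
        case 1
        then have il: "i \<le> nodes L" using L(1) by linarith
        then have "lsub (Node L R) i = lsub L i" by simp
        also have "\<dots> = v i" using L(2)[rule_format, of i] il L(1) i by simp
        finally show ?thesis .
      next
        case 2
        then show ?thesis using L R m1 by simp
      next
        case 3
        define d where "d = i - m"
        have d: "i = d + Suc (nodes L)" "1 \<le> d" "d \<le> n - m" using 3 L(1) m1 i unfolding d_def by auto
        have "lsub (Node L R) i = lsub R d" unfolding d(1) by (rule lsub_Node_r[OF d(2)])
        also have "\<dots> = v' d" using R(2) d by simp
        also have "\<dots> = v i" unfolding v'_def using d L(1) m1 by simp
        finally show ?thesis .
      qed
    qed
    ultimately show ?thesis by blast
  qed
qed


lemma arith4: "(a::nat) = 0 \<or> b = 0 \<Longrightarrow> a' = 0 \<or> b' = 0 \<Longrightarrow> int a - int b \<le> int a' - int b' \<Longrightarrow> a \<le> a' \<and> b' \<le> b"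
  by arith

lemma TI_D: "I \<in> TI n \<Longrightarrow> nodes (fst I) = n \<and> nodes (snd I) = n \<and> tamari_le (fst I) (snd I)"
  unfolding TI_def by auto

lemma dec: "nodes S = n \<Longrightarrow> tamari_le S T \<Longrightarrow> 1 \<le> i \<Longrightarrow> i + 1 \<le> n \<Longrightarrow> rsub S i = 0 \<or> lsub T (i + 1) = 0"
proof (cases "rsub S i = 0")
  case False
  assume a: "nodes S = n" "tamari_le S T" "1 \<le> i" "i + 1 \<le> n"
  have "lsub S (i + 1) < i + 1 - i" using F1[of i "i + 1" S] a False by simp
  moreover have "lsub T (i + 1) \<le> lsub S (i + 1)" using tl_lsub[OF a(2)] .
  ultimately show ?thesis by simp
qed simp

lemma psi_len: "length (psi n I) = n - 1" unfolding psi_def by simp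

lemma psi_nth: "k < n - 1 \<Longrightarrow> psi n I ! k = int (rsub (fst I) (k + 1)) - int (lsub (snd I) (k + 2))"
  unfolding psi_def by simp

lemma cc_u_psi: assumes "(S, T) \<in> TI n" "1 \<le> i" "i \<le> n"
  shows "cc_u n (psi n (S, T)) i = rsub S i"
proof (cases "i \<le> n - 1")
  case True
  have t: "nodes S = n" "tamari_le S T" using TI_D[OF assms(1)] by auto
  have d: "rsub S i = 0 \<or> lsub T (i + 1) = 0" using dec[OF t, of i] assms True by simp
  have "psi n (S, T) ! (i - 1) = int (rsub S i) - int (lsub T (i + 1))"
    using psi_nth[of "i - 1" n "(S, T)"] assms True by simp
  then show ?thesis unfolding cc_u_def using assms True d by auto
next
  case False
  then have "i = n" using assms by simp
  moreover have "rsub S n \<le> nodes S - n" by (rule rsub_bound)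
  ultimately show ?thesis using TI_D[OF assms(1)] False unfolding cc_u_def by simp
qed

lemma cc_v_psi: assumes "(S, T) \<in> TI n" "1 \<le> i" "i \<le> n"
  shows "cc_v n (psi n (S, T)) i = lsub T i"
proof (cases "2 \<le> i")
  case True
  have t: "nodes S = n" "tamari_le S T" using TI_D[OF assms(1)] by auto
  have d: "rsub S (i - 1) = 0 \<or> lsub T (i - 1 + 1) = 0" using dec[OF t, of "i - 1"] assms True by simp
  have e1: "i - 2 + 1 = i - 1" "i - 2 + 2 = i" "i - 2 < n - 1" using True assms by auto
  have "psi n (S, T) ! (i - 2) = int (rsub S (i - 1)) - int (lsub T i)"
    using psi_nth[OF e1(3), of "(S, T)", unfolded e1(1,2)] by simp
  moreover have "i - 1 + 1 = i" using True by simp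
  ultimately show ?thesis unfolding cc_v_def using assms True d by auto
next
  case False
  then have "i = 1" using assms by simp
  moreover have "lsub T 1 \<le> 1 - 1" by (rule lsub_bound)
  ultimately show ?thesis unfolding cc_v_def by simp
qed

lemma td_cong: "(\<forall>i\<in>{1..n}. u i = u' i) \<Longrightarrow> tamari_diagram n u \<Longrightarrow> tamari_diagram n u'"
  unfolding tamari_diagram_def
proof (intro ballI conjI allI impI)
  fix i assume a: "\<forall>i\<in>{1..n}. u i = u' i" "\<forall>i\<in>{1..n}. u i \<le> n - i \<and> (\<forall>j\<le>u i. u (i + j) \<le> u i - j)" "i \<in> {1..n}"
  then show "u' i \<le> n - i" by auto
  fix j assume j: "j \<le> u' i"
  then have "j \<le> u i" "u i \<le> n - i" using a by auto
  then have "i + j \<in> {1..n}" using a(3) by auto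
  then show "u' (i + j) \<le> u' i - j" using a j by force
qed

lemma dtd_cong: "(\<forall>i\<in>{1..n}. u i = u' i) \<Longrightarrow> dual_tamari_diagram n u \<Longrightarrow> dual_tamari_diagram n u'"
  unfolding dual_tamari_diagram_def
proof (intro ballI conjI allI impI)
  fix i assume a: "\<forall>i\<in>{1..n}. u i = u' i" "\<forall>i\<in>{1..n}. u i \<le> i - 1 \<and> (\<forall>j\<le>u i. u (i - j) \<le> u i - j)" "i \<in> {1..n}"
  then show "u' i \<le> i - 1" by auto
  fix j assume j: "j \<le> u' i"
  then have "j \<le> u i" "u i \<le> i - 1" using a by auto
  then have "i - j \<in> {1..n}" using a(3) by auto
  then show "u' (i - j) \<le> u' i - j" using a j by force
qed

lemma tid_cong: "(\<forall>i\<in>{1..n}. u i = u' i) \<Longrightarrow> (\<forall>i\<in>{1..n}. v i = v' i) \<Longrightarrow>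
  tamari_interval_diagram n u v \<Longrightarrow> tamari_interval_diagram n u' v'"
  unfolding tamari_interval_diagram_def
proof (elim conjE, intro conjI)
  assume a: "\<forall>i\<in>{1..n}. u i = u' i" "\<forall>i\<in>{1..n}. v i = v' i" "tamari_diagram n u" "dual_tamari_diagram n v"
    "\<forall>i j. 1 \<le> i \<and> i < j \<and> j \<le> n \<and> j - i \<le> u i \<longrightarrow> v j < j - i"
  show "tamari_diagram n u'" using td_cong[OF a(1,3)] .
  show "dual_tamari_diagram n v'" using dtd_cong[OF a(2,4)] .
  show "\<forall>i j. 1 \<le> i \<and> i < j \<and> j \<le> n \<and> j - i \<le> u' i \<longrightarrow> v' j < j - i"
  proof (intro allI impI)
    fix i j assume b: "1 \<le> i \<and> i < j \<and> j \<le> n \<and> j - i \<le> u' i"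
    then have "u i = u' i" "v j = v' j" using a(1,2) by auto
    then show "v' j < j - i" using a(5) b by metis
  qed
qed

lemma tid_trees: "nodes S = n \<Longrightarrow> nodes T = n \<Longrightarrow> tamari_interval_diagram n (rsub S) (lsub T) \<longleftrightarrow> compat n S T"
  unfolding tamari_interval_diagram_def compat_def
proof -
  assume a: "nodes S = n" "nodes T = n"
  have "tamari_diagram n (rsub S)" unfolding tamari_diagram_def
    using rsub_bound[of S] rsub_nest[of _ S] a by auto
  moreover have "dual_tamari_diagram n (lsub T)" unfolding dual_tamari_diagram_def
    using lsub_bound[of T] lsub_nest[of _ T] a by auto
  ultimately show "(tamari_diagram n (rsub S) \<and> dual_tamari_diagram n (lsub T) \<and>
     (\<forall>i j. 1 \<le> i \<and> i < j \<and> j \<le> n \<and> j - i \<le> rsub S i \<longrightarrow> lsub T j < j - i)) =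
    (\<forall>i j. 1 \<le> i \<and> i < j \<and> j \<le> n \<and> j - i \<le> rsub S i \<longrightarrow> lsub T j < j - i)" by simp
qed


lemma tl_iff_r: "nodes S = n \<Longrightarrow> nodes S' = n \<Longrightarrow> tamari_le S S' \<longleftrightarrow> (\<forall>i. 1 \<le> i \<and> i \<le> n \<longrightarrow> rsub S i \<le> rsub S' i)"
  using tl_rsub rle_tl by metis

lemma tl_iff_l: "nodes T = n \<Longrightarrow> nodes T' = n \<Longrightarrow> tamari_le T T' \<longleftrightarrow> (\<forall>i. 1 \<le> i \<and> i \<le> n \<longrightarrow> lsub T' i \<le> lsub T i)"
proof
  assume "tamari_le T T'" then show "\<forall>i. 1 \<le> i \<and> i \<le> n \<longrightarrow> lsub T' i \<le> lsub T i" using tl_lsub by blast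
next
  assume a: "nodes T = n" "nodes T' = n" "\<forall>i. 1 \<le> i \<and> i \<le> n \<longrightarrow> lsub T' i \<le> lsub T i"
  have "compat n T T'" using lle_compat[OF a(1)] a(3) by blast
  then have "\<forall>i. 1 \<le> i \<and> i \<le> n \<longrightarrow> rsub T i \<le> rsub T' i" using compat_rle[OF a(1,2)] by blast
  then show "tamari_le T T'" using rle_tl a by simp
qed

lemma image_CC: assumes "(S, T) \<in> TI n" shows "psi n (S, T) \<in> CC n"
proof -
  have t: "nodes S = n" "nodes T = n" "tamari_le S T" using TI_D[OF assms] by auto
  have "compat n S T" using rle_compat[OF t(2)] tl_rsub[OF t(3)] by blast
  then have "tamari_interval_diagram n (rsub S) (lsub T)" using tid_trees[OF t(1,2)] by simp
  moreover have "\<forall>i\<in>{1..n}. rsub S i = cc_u n (psi n (S, T)) i" using cc_u_psi[OF assms] by simp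
  moreover have "\<forall>i\<in>{1..n}. lsub T i = cc_v n (psi n (S, T)) i" using cc_v_psi[OF assms] by simp
  ultimately have "tamari_interval_diagram n (cc_u n (psi n (S, T))) (cc_v n (psi n (S, T)))"
    using tid_cong by blast
  then show ?thesis unfolding CC_def using psi_len by simp
qed

lemma psi_inj: assumes "(S, T) \<in> TI n" "(S', T') \<in> TI n" "psi n (S, T) = psi n (S', T')"
  shows "(S, T) = (S', T')"
proof -
  have t: "nodes S = n" "nodes T = n" "tamari_le S T" using TI_D[OF assms(1)] by auto
  have t': "nodes S' = n" "nodes T' = n" "tamari_le S' T'" using TI_D[OF assms(2)] by auto
  have r: "\<forall>i. 1 \<le> i \<and> i \<le> nodes S \<longrightarrow> rsub S i = rsub S' i"
    using cc_u_psi[OF assms(1)] cc_u_psi[OF assms(2)] assms(3) t by metis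
  have l: "\<forall>i. 1 \<le> i \<and> i \<le> n \<longrightarrow> lsub T i = lsub T' i"
    using cc_v_psi[OF assms(1)] cc_v_psi[OF assms(2)] assms(3) by metis
  have "compat n T T'" using lle_compat[OF t(2)] l by simp
  moreover have "compat n T' T" using lle_compat[OF t'(2)] l by simp
  ultimately have "\<forall>i. 1 \<le> i \<and> i \<le> nodes T \<longrightarrow> rsub T i = rsub T' i"
    using compat_rle[OF t(2) t'(2)] compat_rle[OF t'(2) t(2)] t(2) by (meson antisym)
  then have "T = T'" using r_inj t t' by simp
  moreover have "S = S'" using r_inj r t t' by simp
  ultimately show ?thesis by simp
qed

lemma psi_surj: assumes "c \<in> CC n" shows "\<exists>I\<in>TI n. psi n I = c"
proof -
  have c: "length c = n - 1" "tamari_interval_diagram n (cc_u n c) (cc_v n c)" using assms unfolding CC_def by auto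
  obtain S where S: "nodes S = n" "\<forall>i. 1 \<le> i \<and> i \<le> n \<longrightarrow> rsub S i = cc_u n c i"
    using r_surj c(2) unfolding tamari_interval_diagram_def by blast
  obtain T where T: "nodes T = n" "\<forall>i. 1 \<le> i \<and> i \<le> n \<longrightarrow> lsub T i = cc_v n c i"
    using l_surj c(2) unfolding tamari_interval_diagram_def by blast
  have "tamari_interval_diagram n (rsub S) (lsub T)"
    using tid_cong[OF _ _ c(2), of "rsub S" "lsub T"] S T by simp
  then have "compat n S T" using tid_trees[OF S(1) T(1)] by simp
  then have "tamari_le S T" using compat_rle[OF S(1) T(1)] rle_tl S T by simp
  then have I: "(S, T) \<in> TI n" unfolding TI_def using S T by simp
  have "psi n (S, T) = c"
  proof (rule nth_equalityI)
    show "length (psi n (S, T)) = length c" using psi_len c by simp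
    fix k assume k: "k < length (psi n (S, T))"
    then have k': "k < n - 1" using psi_len by simp
    have k2: "Suc (Suc k) \<le> n" using k' by simp
    have "psi n (S, T) ! k = int (rsub S (k + 1)) - int (lsub T (k + 2))" using psi_nth[OF k'] by simp
    also have "\<dots> = int (cc_u n c (k + 1)) - int (cc_v n c (k + 2))" using S(2) T(2) k' by simp
    also have "\<dots> = c ! k" unfolding cc_u_def cc_v_def using k' k2 by (auto simp add: max_def min_def)
    finally show "psi n (S, T) ! k = c ! k" .
  qed
  then show ?thesis using I by blast
qed

lemma order_iso: assumes "(S, T) \<in> TI n" "(S', T') \<in> TI n"
  shows "ti_le (S, T) (S', T') \<longleftrightarrow> cc_le (psi n (S, T)) (psi n (S', T'))"
proof -
  have t: "nodes S = n" "nodes T = n" "tamari_le S T" using TI_D[OF assms(1)] by auto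
  have t': "nodes S' = n" "nodes T' = n" "tamari_le S' T'" using TI_D[OF assms(2)] by auto
  have cc: "cc_le (psi n (S, T)) (psi n (S', T')) \<longleftrightarrow> (\<forall>k < n - 1. psi n (S, T) ! k \<le> psi n (S', T') ! k)"
    unfolding cc_le_def list_all2_conv_all_nth psi_len by simp
  have nth: "\<And>k. k < n - 1 \<Longrightarrow> psi n (S, T) ! k = int (rsub S (k + 1)) - int (lsub T (k + 2))
      \<and> psi n (S', T') ! k = int (rsub S' (k + 1)) - int (lsub T' (k + 2))
      \<and> (rsub S (k + 1) = 0 \<or> lsub T (k + 1 + 1) = 0) \<and> (rsub S' (k + 1) = 0 \<or> lsub T' (k + 1 + 1) = 0)"
    using psi_nth dec[OF t(1,3)] dec[OF t'(1,3)] by simp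
  have ti: "ti_le (S, T) (S', T') \<longleftrightarrow> (\<forall>i. 1 \<le> i \<and> i \<le> n \<longrightarrow> rsub S i \<le> rsub S' i)
      \<and> (\<forall>i. 1 \<le> i \<and> i \<le> n \<longrightarrow> lsub T' i \<le> lsub T i)"
    unfolding ti_le_def using tl_iff_r[OF t(1) t'(1)] tl_iff_l[OF t(2) t'(2)] by simp
  show ?thesis
  proof
    assume "ti_le (S, T) (S', T')"
    then have a: "\<forall>i. 1 \<le> i \<and> i \<le> n \<longrightarrow> rsub S i \<le> rsub S' i"
      "\<forall>i. 1 \<le> i \<and> i \<le> n \<longrightarrow> lsub T' i \<le> lsub T i" using ti by auto
    show "cc_le (psi n (S, T)) (psi n (S', T'))" unfolding cc
    proof (intro allI impI)
      fix k assume k: "k < n - 1"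
      have "rsub S (k + 1) \<le> rsub S' (k + 1)" "lsub T' (k + 2) \<le> lsub T (k + 2)"
        using a[rule_format, of "k + 1"] a[rule_format, of "k + 2"] k by auto
      then show "psi n (S, T) ! k \<le> psi n (S', T') ! k" using nth[OF k] by simp
    qed
  next
    assume "cc_le (psi n (S, T)) (psi n (S', T'))"
    then have c: "\<And>k. k < n - 1 \<Longrightarrow> psi n (S, T) ! k \<le> psi n (S', T') ! k" using cc by blast
    have b: "\<And>k. k < n - 1 \<Longrightarrow> rsub S (k + 1) \<le> rsub S' (k + 1) \<and> lsub T' (k + 2) \<le> lsub T (k + 2)"
    proof -
      fix k assume k: "k < n - 1"
      have e: "k + 1 + 1 = k + 2" by simp
      show "rsub S (k + 1) \<le> rsub S' (k + 1) \<and> lsub T' (k + 2) \<le> lsub T (k + 2)"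
        using arith4[of "rsub S (k + 1)" "lsub T (k + 2)" "rsub S' (k + 1)" "lsub T' (k + 2)"]
          nth[OF k, unfolded e] c[OF k] by simp
    qed
    have "\<forall>i. 1 \<le> i \<and> i \<le> n \<longrightarrow> rsub S i \<le> rsub S' i"
    proof (intro allI impI)
      fix i assume i: "1 \<le> i \<and> i \<le> n"
      show "rsub S i \<le> rsub S' i"
      proof (cases "i = n")
        case True
        have "rsub S n \<le> nodes S - n" by (rule rsub_bound)
        then show ?thesis using True t by simp
      next
        case False
        then have "i - 1 < n - 1" "i - 1 + 1 = i" using i by auto
        then show ?thesis using b[of "i - 1"] by simp
      qed
    qed
    moreover have "\<forall>i. 1 \<le> i \<and> i \<le> n \<longrightarrow> lsub T' i \<le> lsub T i"
    proof (intro allI impI)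
      fix i assume i: "1 \<le> i \<and> i \<le> n"
      show "lsub T' i \<le> lsub T i"
      proof (cases "i = 1")
        case True
        have "lsub T' 1 \<le> 1 - 1" by (rule lsub_bound)
        then show ?thesis using True by simp
      next
        case False
        then have "i - 2 < n - 1" "i - 2 + 2 = i" using i by auto
        then show ?thesis using b[of "i - 2"] by simp
      qed
    qed
    ultimately show "ti_le (S, T) (S', T')" using ti by simp
  qed
qed

theorem theorem3p2:
  fixes n :: nat
  assumes "n \<ge> 1"
  shows "psi n ` TI n \<subseteq> CC n
    \<and> bij_betw (psi n) (TI n) (CC n)
    \<and> (\<forall>I\<in>TI n. \<forall>J\<in>TI n. ti_le I J \<longleftrightarrow> cc_le (psi n I) (psi n J))"
proof (intro conjI)
  show sub: "psi n ` TI n \<subseteq> CC n" using image_CC by auto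
  show "bij_betw (psi n) (TI n) (CC n)" unfolding bij_betw_def
  proof
    show "inj_on (psi n) (TI n)" unfolding inj_on_def using psi_inj by auto
    show "psi n ` TI n = CC n" using sub psi_surj by blast
  qed
  show "\<forall>I\<in>TI n. \<forall>J\<in>TI n. ti_le I J \<longleftrightarrow> cc_le (psi n I) (psi n J)"
    using order_iso by auto
qed

end
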